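(* For $\sigma>0$ and $k\ge 0$, define the price-to-delta ratio $$C_{\mathcal D}(\sigma;k)=\frac{C_{\mathrm{BS}}(\sigma;k)}{\Phi(d_1(\sigma;k))}=1-e^k\frac{\Phi(d_2(\sigma;k))}{\Phi(d_1(\sigma;k))}=1-\frac{R(-d_2(\sigma;k))}{R(-d_1(\sigma;k))}.$$ Then $C_{\mathcal D}(\sigma;k)$ is monotonically increasing in $\sigma>0$ for each fixed $k\ge0$, and monotonically decreasing in $k\ge 0$ for each fixed $\sigma>0$.
   Context: Let $\Phi$ and $\phi$ denote the standard normal distribution function and density, and let $R(x)=\Phi(-x)/\phi(x)$ be the Mills ratio. For $\sigma>0$, $k\ge 0$ put $d_1(\sigma;k)=-k/\sigma+\sigma/2$, $d_2(\sigma;k)=-k/\sigma-\sigma/2$, and $C_{\mathrm{BS}}(\sigma;k)=\Phi(d_1(\sigma;k))-e^k\,\Phi(d_2(\sigma;k))$. *)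

theory Defs
  imports "HOL-Probability.Probability"
begin

definition Phi :: "real \<Rightarrow> real" where
  "Phi x = (LBINT t:{..x}. std_normal_density t)"

definition phi :: "real \<Rightarrow> real" where
  "phi x = std_normal_density x"

definition mills :: "real \<Rightarrow> real" where
  "mills x = Phi (- x) / phi x"

definition d1 :: "real \<Rightarrow> real \<Rightarrow> real" where
  "d1 \<sigma> k = - k / \<sigma> + \<sigma> / 2"

definition d2 :: "real \<Rightarrow> real \<Rightarrow> real" where
  "d2 \<sigma> k = - k / \<sigma> - \<sigma> / 2"

definition C_BS :: "real \<Rightarrow> real \<Rightarrow> real" where
  "C_BS \<sigma> k = Phi (d1 \<sigma> k) - exp k * Phi (d2 \<sigma> k)"

definition C_D :: "real \<Rightarrow> real \<Rightarrow> real" where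
  "C_D \<sigma> k = C_BS \<sigma> k / Phi (d1 \<sigma> k)"

end

theory Submission
  imports Defs
begin

lemma phi_integrable: "A \<in> sets lborel \<Longrightarrow> set_integrable lborel A phi"
  unfolding set_integrable_def phi_def
  by (intro integrable_mult_indicator) auto

lemma Phi_eq: "Phi x = (LBINT t=-\<infinity>..ereal x. phi t)"
proof -
  have "(LBINT t=-\<infinity>..ereal x. phi t) = (LBINT t:{..<x}. phi t)"
    by (simp add: interval_lebesgue_integral_def)
  also have "\<dots> = (LBINT t:{..x}. phi t)"
    unfolding set_lebesgue_integral_def
    using AE_lborel_singleton[of x] by (intro integral_cong_AE) (auto elim!: eventually_mono split: split_indicator simp: phi_def)
  finally show ?thesis by (simp add: Phi_def phi_def)
qed

lemma phi_cont: "continuous_on A phi"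
  unfolding phi_def std_normal_density_def by (intro continuous_intros) auto

lemma Phi_deriv: "(Phi has_real_derivative phi x) (at x)"
proof -
  define c where "c = x - 1"
  have eq: "Phi u = (LBINT t=-\<infinity>..ereal c. phi t) + (LBINT t=ereal c..ereal u. phi t)" for u
    unfolding Phi_eq
    by (rule interval_integral_sum[symmetric])
       (auto simp: interval_lebesgue_integrable_def intro!: phi_integrable)
  have "((\<lambda>u. LBINT y=c..u. phi y) has_vector_derivative (phi x)) (at x within {x-1..x+1})"
    by (rule interval_integral_FTC2) (auto simp: c_def intro: phi_cont)
  then have "((\<lambda>u. LBINT y=c..u. phi y) has_vector_derivative (phi x)) (at x within {x-1<..<x+1})"
    by (rule has_vector_derivative_within_subset) auto
  then have "((\<lambda>u. LBINT y=c..u. phi y) has_vector_derivative (phi x)) (at x)"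
    by (subst (asm) has_vector_derivative_within_open) auto
  then have "((\<lambda>u. (LBINT t=-\<infinity>..ereal c. phi t) + (LBINT y=c..u. phi y)) has_real_derivative (phi x)) (at x)"
    by (auto intro!: derivative_eq_intros simp: has_real_derivative_iff_has_vector_derivative)
  then show ?thesis unfolding eq[abs_def] by simp
qed

lemma phi_pos: "phi x > 0"
  by (simp add: phi_def normal_density_pos)

lemma Phi_nonneg: "Phi x \<ge> 0"
  unfolding Phi_def set_lebesgue_integral_def by (intro Bochner_Integration.integral_nonneg) (auto simp: indicator_def)

lemma Phi_pos: "Phi x > 0"
proof -
  have "Phi (x - 1) < Phi x"
    by (rule DERIV_pos_imp_increasing[of "x-1" x]) (auto intro!: exI Phi_deriv phi_pos)
  with Phi_nonneg[of "x-1"] show ?thesis by (simp add: mult.commute)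
qed

lemma phi_deriv: "(phi has_real_derivative (- x * phi x)) (at x)"
  unfolding phi_def std_normal_density_def
  by (auto intro!: derivative_eq_intros simp: field_simps power2_eq_square)

lemma phi_lim: "(phi \<longlongrightarrow> 0) at_bot"
  unfolding phi_def std_normal_density_def by real_asymp

lemma Phi_bound:
  assumes "x < 0"
  shows "- x * Phi x \<le> phi x"
proof -
  let ?f = "\<lambda>t. t / x * phi t"
  let ?F = "\<lambda>t. - phi t / x"
  have F: "(?F has_real_derivative ?f t) (at t)" for t
    using phi_deriv[of t] assms by (auto intro!: derivative_eq_intros simp: field_simps)
  have A: "((?F \<circ> real_of_ereal) \<longlongrightarrow> 0) (at_right (-\<infinity>))"
    unfolding ereal_tendsto_simps1
    using tendsto_divide[OF tendsto_minus[OF phi_lim] tendsto_const[of x]] assms by simp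
  have B: "((?F \<circ> real_of_ereal) \<longlongrightarrow> ?F x) (at_left (ereal x))"
    unfolding ereal_tendsto_simps1 using assms
    by (intro tendsto_intros continuous_on_tendsto_compose[OF phi_cont[of UNIV]]) (auto intro: filterlim_ident tendsto_ident_at)
  have nn: "AE t in lborel. -\<infinity> < ereal t \<longrightarrow> ereal t < ereal x \<longrightarrow> 0 \<le> ?f t"
    using assms by (intro AE_I2) (auto intro!: divide_nonpos_neg mult_nonpos_nonneg less_imp_le[OF phi_pos])
  have ct: "isCont ?f t" for t
    using phi_cont[of UNIV] assms by (auto intro!: continuous_intros simp: continuous_on_eq_continuous_at)
  have I: "set_integrable lborel (einterval (-\<infinity>) (ereal x)) ?f"
     "(LBINT t=-\<infinity>..ereal x. ?f t) = ?F x - 0"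
    using interval_integral_FTC_nonneg[OF _ F ct nn A B] by auto
  have "Phi x = (LBINT t:{..<x}. phi t)" by (simp add: Phi_eq interval_lebesgue_integral_def)
  also have "\<dots> \<le> (LBINT t:{..<x}. ?f t)"
    apply (rule set_integral_mono)
    using I(1) assms apply (auto intro!: phi_integrable)
    subgoal for t
    proof -
      assume h: "t < x" "x < 0"
      have "1 \<le> t / x" using h by (simp add: le_divide_eq)
      from mult_left_mono[OF this less_imp_le[OF phi_pos[of t]]] show ?thesis by (simp add: mult.commute)
    qed
    done
  also have "\<dots> = (LBINT t=-\<infinity>..ereal x. ?f t)" by (simp add: interval_lebesgue_integral_def)
  finally have "Phi x \<le> (LBINT t=-\<infinity>..ereal x. ?f t)" .
  with I(2) assms show ?thesis by (simp add: field_simps)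
qed


lemma mono_from_deriv:
  fixes f :: "real \<Rightarrow> real"
  assumes d: "\<And>x. (f has_real_derivative f' x) (at x)" and nn: "\<And>x. f' x \<ge> 0" and "a \<le> b"
  shows "f a \<le> f b"
proof (rule DERIV_nonneg_imp_increasing_open[OF \<open>a \<le> b\<close>])
  show "\<And>x. a < x \<Longrightarrow> x < b \<Longrightarrow> \<exists>y. DERIV f x :> y \<and> 0 \<le> y" using d nn by blast
  show "continuous_on {a..b} f"
    using d by (intro continuous_at_imp_continuous_on ballI DERIV_isCont) blast
qed

definition g :: "real \<Rightarrow> real" where "g x = Phi x / phi x"

lemma g_pos: "g x > 0" using Phi_pos phi_pos by (simp add: g_def)

lemma g_deriv: "(g has_real_derivative (1 + x * g x)) (at x)"
proof -
  have "(g has_real_derivative (phi x * phi x - Phi x * (- x * phi x)) / (phi x * phi x)) (at x)"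
    unfolding g_def[abs_def] using phi_pos[of x]
    by (intro DERIV_divide Phi_deriv phi_deriv) auto
  moreover have "(phi x * phi x - Phi x * (- x * phi x)) / (phi x * phi x) = 1 + x * g x"
    using phi_pos[of x] by (simp add: g_def field_simps)
  ultimately show ?thesis by simp
qed

lemma g'_nonneg: "1 + x * g x \<ge> 0"
proof (cases "x < 0")
  case True
  with Phi_bound[OF True] phi_pos[of x] show ?thesis
    by (simp add: g_def field_simps)
next
  case False with g_pos[of x] show ?thesis by simp
qed

lemma g_mono: "a \<le> b \<Longrightarrow> g a \<le> g b"
  by (rule mono_from_deriv[OF g_deriv g'_nonneg])

definition Q :: "real \<Rightarrow> real" where "Q x = (g x ^ 2 - x * g x - 1) * phi x"

lemma Q_deriv: "(Q has_real_derivative (phi x * g x * (1 + x * g x))) (at x)"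
proof -
  have "(Q has_real_derivative ((2 * g x * (1 + x * g x) - (g x + x * (1 + x * g x))) * phi x
          + (g x ^ 2 - x * g x - 1) * (- x * phi x))) (at x)"
    unfolding Q_def[abs_def]
    by (auto intro!: derivative_eq_intros g_deriv phi_deriv simp: algebra_simps power2_eq_square)
  moreover have "(2 * g x * (1 + x * g x) - (g x + x * (1 + x * g x))) * phi x
          + (g x ^ 2 - x * g x - 1) * (- x * phi x) = phi x * g x * (1 + x * g x)"
    by (simp add: algebra_simps power2_eq_square)
  ultimately show ?thesis by simp
qed

lemma Q_lim: "(Q \<longlongrightarrow> 0) at_bot"
proof (rule Lim_null_comparison)
  show "((\<lambda>x. 3 * phi x) \<longlongrightarrow> 0) at_bot"
    using tendsto_mult[OF tendsto_const[of 3] phi_lim] by simp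
  show "\<forall>\<^sub>F x in at_bot. norm (Q x) \<le> 3 * phi x"
    unfolding eventually_at_bot_linorder
  proof (intro exI[of _ "-1"] allI impI)
    fix x :: real assume x: "x \<le> -1"
    have g0: "g x > 0" by (rule g_pos)
    have h1: "- x * g x \<le> 1" using g'_nonneg[of x] by simp
    have "g x \<le> - x * g x" using mult_right_mono[of 1 "-x" "g x"] x g0 by simp
    with h1 have g1: "g x \<le> 1" by simp
    have "g x ^ 2 \<le> 1" using g0 g1 by (simp add: power_le_one)
    have h2: "x * g x \<le> 0" using x g0 by (simp add: mult_nonpos_nonneg)
    have h3: "0 \<le> g x ^ 2" by simp
    have "\<bar>g x ^ 2 - x * g x - 1\<bar> \<le> 3" unfolding abs_le_iff using h1 h2 h3 \<open>g x ^ 2 \<le> 1\<close> by linarith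
    then show "norm (Q x) \<le> 3 * phi x"
      using phi_pos[of x] by (simp add: Q_def abs_mult mult_right_mono)
  qed
qed

lemma Q_nonneg: "Q x \<ge> 0"
proof (rule tendsto_upperbound[OF Q_lim])
  show "\<forall>\<^sub>F y in at_bot. Q y \<le> Q x"
    unfolding eventually_at_bot_linorder
    by (intro exI[of _ x] allI impI mono_from_deriv[OF Q_deriv])
       (auto intro!: mult_nonneg_nonneg g'_nonneg less_imp_le[OF phi_pos] less_imp_le[OF g_pos])
qed simp

lemma q_nonneg: "g x ^ 2 - x * g x - 1 \<ge> 0"
  using Q_nonneg[of x] phi_pos[of x] by (simp add: Q_def zero_le_mult_iff)

definition u :: "real \<Rightarrow> real" where "u x = x + 1 / g x"

lemma u_deriv: "(u has_real_derivative (g x ^ 2 - x * g x - 1) / (g x)^2) (at x)"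
proof -
  have "(u has_real_derivative 1 + (0 * g x - 1 * (1 + x * g x)) / (g x * g x)) (at x)"
    unfolding u_def[abs_def] using g_pos[of x]
    by (intro derivative_intros DERIV_divide g_deriv) auto
  moreover have "1 + (0 * g x - 1 * (1 + x * g x)) / (g x * g x) = (g x ^ 2 - x * g x - 1) / (g x)^2"
    using g_pos[of x] by (simp add: field_simps power2_eq_square)
  ultimately show ?thesis by simp
qed

lemma u_mono: "a \<le> b \<Longrightarrow> u a \<le> u b"
  by (rule mono_from_deriv[OF u_deriv]) (use q_nonneg in simp)

lemma key:
  assumes "s \<ge> 0" "y \<le> x"
  shows "g (y + s) / g y \<le> g (x + s) / g x"
proof (rule mono_from_deriv[OF _ _ \<open>y \<le> x\<close>, of "\<lambda>t. g (t + s) / g t"])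
  fix t
  let ?D = "((1 + (t + s) * g (t + s)) * g t - g (t + s) * (1 + t * g t)) / (g t * g t)"
  show "((\<lambda>t. g (t + s) / g t) has_real_derivative ?D) (at t)"
  proof -
    have dd: "((\<lambda>t. t + s) has_real_derivative 1) (at t)" by (auto intro!: derivative_eq_intros)
    show ?thesis using DERIV_divide[OF DERIV_chain2[OF g_deriv dd] g_deriv] g_pos[of t] by simp
  qed
  have "u t \<le> u (t + s)" using assms by (intro u_mono) simp
  then have "0 \<le> (s + 1 / g (t + s) - 1 / g t) * (g t * g (t + s))"
    using g_pos[of t] g_pos[of "t+s"] by (simp add: u_def)
  also have "\<dots> = (1 + (t + s) * g (t + s)) * g t - g (t + s) * (1 + t * g t)"
    using g_pos[of t] g_pos[of "t+s"] by (simp add: field_simps)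
  finally show "?D \<ge> 0" using g_pos[of t] by simp
qed


lemma phi_shift:
  assumes "\<sigma> > 0"
  shows "exp k * phi (d2 \<sigma> k) = phi (d1 \<sigma> k)"
proof -
  have e: "k + - (d2 \<sigma> k)\<^sup>2 / 2 = - (d1 \<sigma> k)\<^sup>2 / 2"
    using assms by (simp add: d1_def d2_def field_simps power2_eq_square)
  have "exp k * phi (d2 \<sigma> k) = (1 / sqrt (2 * pi)) * exp (k + - (d2 \<sigma> k)\<^sup>2 / 2)"
    by (simp add: phi_def std_normal_density_def mult_exp_exp)
  also have "\<dots> = phi (d1 \<sigma> k)" by (simp only: e) (simp add: phi_def std_normal_density_def)
  finally show ?thesis .
qed

lemma C_D_eq:
  assumes "\<sigma> > 0"
  shows "C_D \<sigma> k = 1 - g (d2 \<sigma> k) / g (d1 \<sigma> k)"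
proof -
  have P: "Phi x = g x * phi x" for x using phi_pos[of x] by (simp add: g_def)
  have "C_D \<sigma> k = (g (d1 \<sigma> k) * phi (d1 \<sigma> k) - g (d2 \<sigma> k) * (exp k * phi (d2 \<sigma> k)))
                    / (g (d1 \<sigma> k) * phi (d1 \<sigma> k))"
    unfolding C_D_def C_BS_def P by (simp add: algebra_simps)
  also have "\<dots> = 1 - g (d2 \<sigma> k) / g (d1 \<sigma> k)"
    unfolding phi_shift[OF assms] using g_pos[of "d1 \<sigma> k"] phi_pos[of "d1 \<sigma> k"]
    by (simp add: field_simps)
  finally show ?thesis .
qed

lemma d1_eq: "d1 \<sigma> k = d2 \<sigma> k + \<sigma>" by (simp add: d1_def d2_def)

theorem lemma1:
  shows "(\<forall>k\<ge>0. mono_on {0<..} (\<lambda>\<sigma>. C_D \<sigma> k))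
       \<and> (\<forall>\<sigma>>0. antimono_on {0..} (\<lambda>k. C_D \<sigma> k))"
proof (intro conjI allI impI)
  fix k :: real assume k: "k \<ge> 0"
  show "mono_on {0<..} (\<lambda>\<sigma>. C_D \<sigma> k)"
  proof (rule mono_onI)
    fix \<sigma> \<sigma>' :: real assume s: "\<sigma> \<in> {0<..}" "\<sigma>' \<in> {0<..}" "\<sigma> \<le> \<sigma>'"
    define a where "a = d2 \<sigma> k"
    define b where "b = d1 \<sigma> k"
    define a' where "a' = d2 \<sigma>' k"
    define b' where "b' = d1 \<sigma>' k"
    have bb: "b \<le> b'"
    proof -
      have "k / \<sigma>' \<le> k / \<sigma>" using s k by (intro divide_left_mono) auto
      then show ?thesis using s by (simp add: b_def b'_def d1_def)
    qed
    have ga: "g a > 0" "g b > 0" "g a' > 0" "g b' > 0" using g_pos by auto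
    have main: "g a' * g b \<le> g a * g b'"
    proof (cases "a' \<le> a")
      case True
      show ?thesis using g_mono[OF True] g_mono[OF bb] ga
        by (intro mult_mono) auto
    next
      case False
      have "g (a + \<sigma>) / g a \<le> g (a' + \<sigma>) / g a'"
        using False s by (intro key) auto
      then have 1: "g b * g a' \<le> g (a' + \<sigma>) * g a"
        using ga by (simp add: b_def a_def d1_eq divide_simps mult.commute)
      have "g (a' + \<sigma>) \<le> g b'" using s by (intro g_mono) (simp add: b'_def a'_def d1_eq)
      then have "g (a' + \<sigma>) * g a \<le> g b' * g a" using ga by (intro mult_right_mono) auto
      with 1 show ?thesis by (simp add: mult.commute)
    qed
    have "g a' / g b' \<le> g a / g b" using main ga by (simp add: divide_simps mult.commute)
    then show "C_D \<sigma> k \<le> C_D \<sigma>' k"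
      using s by (simp add: C_D_eq a_def b_def a'_def b'_def)
  qed
next
  fix \<sigma> :: real assume s: "\<sigma> > 0"
  show "antimono_on {0..} (\<lambda>k. C_D \<sigma> k)"
  proof (rule monotone_onI)
    fix k k' :: real assume kk: "k \<in> {0..}" "k' \<in> {0..}" "k \<le> k'"
    have le: "d2 \<sigma> k' \<le> d2 \<sigma> k" using s kk by (simp add: d2_def divide_right_mono)
    have "g (d2 \<sigma> k' + \<sigma>) / g (d2 \<sigma> k') \<le> g (d2 \<sigma> k + \<sigma>) / g (d2 \<sigma> k)"
      using s le by (intro key) auto
    then have "g (d1 \<sigma> k') / g (d2 \<sigma> k') \<le> g (d1 \<sigma> k) / g (d2 \<sigma> k)" by (simp add: d1_eq)
    then have "g (d1 \<sigma> k') * g (d2 \<sigma> k) \<le> g (d1 \<sigma> k) * g (d2 \<sigma> k')"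
      using g_pos[of "d2 \<sigma> k"] g_pos[of "d2 \<sigma> k'"] by (simp add: divide_simps)
    then have "g (d2 \<sigma> k) / g (d1 \<sigma> k) \<le> g (d2 \<sigma> k') / g (d1 \<sigma> k')"
      using g_pos[of "d1 \<sigma> k"] g_pos[of "d1 \<sigma> k'"] by (simp add: divide_simps mult.commute)
    then show "C_D \<sigma> k' \<le> C_D \<sigma> k" using s by (simp add: C_D_eq)
  qed
qed

end
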